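(* Let $R$ be a unital ring and $E$ a directed graph. If for some integer $t\ge 0$ one has $C_{t+1}\subseteq\bigcup_{m=0}^{t}C_m$, then $\bigcup_{m=0}^{\infty}C_m=\bigcup_{m=0}^{t}C_m$.
   Context: A directed graph $E=(E^0,E^1,s,r)$ has vertex set $E^0$, edge set $E^1$, source and range maps $s,r$. A path is a sequence of edges $f_1\cdots f_n$ with $s(f_{i+1})=r(f_i)$, of length $\mathrm{len}=n$ (vertices are paths of length 0). $L_R(E)$ is the $R$-algebra generated by $v\in E^0$, $f,f^*$ ($f\in E^1$), with $R$ commuting with generators, subject to $v_iv_j=\delta_{i,j}v_i$; $s(f)f=fr(f)=f$, $r(f)f^*=f^*s(f)=f^*$; $f^*f'=\delta_{f,f'}r(f)$; and $\sum_{s(f)=v}ff^*=v$ whenever $s^{-1}(v)$ is nonempty and finite. For a path $\alpha=f_1\cdots f_n$, $\alpha^*=f_n^*\cdots f_1^*$. For $m\ge 0$, $C_m=\mathrm{Span}_R\{\alpha\beta^*:\alpha,\beta\text{ paths},\ \mathrm{len}(\alpha)=\mathrm{len}(\beta)=m\}\subseteq L_R(E)$. *)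

theory Defs
  imports "HOL-Library.Poly_Mapping" "Graph_Theory.Digraph" "Graph_Theory.Arc_Walk"
begin

text \<open>Generators of the Leavitt path algebra: vertices, real edges, ghost edges.\<close>
datatype ('v, 'e) lgen = LV 'v | LE 'e | LG 'e

text \<open>We wrap lists so that the monoid is written additively, as required by the
  monoid-ring construction of HOL-Library.Poly_Mapping.\<close>
datatype 'a word = Word "'a list"

instantiation word :: (type) monoid_add
begin
definition zero_word_def: "0 = Word []"
fun plus_word where "plus_word (Word xs) (Word ys) = Word (xs @ ys)"
instance
proof
  fix a b c :: "'a word"
  show "a + b + c = a + (b + c)" by (cases a; cases b; cases c) simp
  show "0 + a = a" by (cases a) (simp add: zero_word_def)
  show "a + 0 = a" by (cases a) (simp add: zero_word_def)
qed
end

text \<open>The free R-algebra R<X> on the generators (R commuting with generators) is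
  the monoid ring R[X*] of finitely supported functions words => R.\<close>
type_synonym ('r, 'v, 'e) freealg = "(('v, 'e) lgen word \<Rightarrow>\<^sub>0 'r)"

definition gm :: "('v, 'e) lgen \<Rightarrow> ('r::ring_1, 'v, 'e) freealg" where
  "gm g = Poly_Mapping.single (Word [g]) 1"

definition scal :: "'r::ring_1 \<Rightarrow> ('r, 'v, 'e) freealg" where
  "scal c = Poly_Mapping.single 0 c"

text \<open>The defining relations of L_R(E), each written as (lhs - rhs).  Generators
  not belonging to the graph are killed, so that the quotient is exactly L_R(E).\<close>
inductive_set leavitt_rels :: "('v, 'e) pre_digraph \<Rightarrow> ('r::ring_1, 'v, 'e) freealg set"
  for G where
  nonvert: "v \<notin> verts G \<Longrightarrow> gm (LV v) \<in> leavitt_rels G"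
| nonedge1: "e \<notin> arcs G \<Longrightarrow> gm (LE e) \<in> leavitt_rels G"
| nonedge2: "e \<notin> arcs G \<Longrightarrow> gm (LG e) \<in> leavitt_rels G"
| vv: "v \<in> verts G \<Longrightarrow> w \<in> verts G \<Longrightarrow>
      gm (LV v) * gm (LV w) - (if v = w then gm (LV v) else 0) \<in> leavitt_rels G"
| se: "e \<in> arcs G \<Longrightarrow> gm (LV (tail G e)) * gm (LE e) - gm (LE e) \<in> leavitt_rels G"
| er: "e \<in> arcs G \<Longrightarrow> gm (LE e) * gm (LV (head G e)) - gm (LE e) \<in> leavitt_rels G"
| rg: "e \<in> arcs G \<Longrightarrow> gm (LV (head G e)) * gm (LG e) - gm (LG e) \<in> leavitt_rels G"
| gs: "e \<in> arcs G \<Longrightarrow> gm (LG e) * gm (LV (tail G e)) - gm (LG e) \<in> leavitt_rels G"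
| ck1: "e \<in> arcs G \<Longrightarrow> f \<in> arcs G \<Longrightarrow>
      gm (LG e) * gm (LE f) - (if e = f then gm (LV (head G e)) else 0) \<in> leavitt_rels G"
| ck2: "v \<in> verts G \<Longrightarrow> {e \<in> arcs G. tail G e = v} \<noteq> {} \<Longrightarrow>
      finite {e \<in> arcs G. tail G e = v} \<Longrightarrow>
      (\<Sum>e\<in>{e \<in> arcs G. tail G e = v}. gm (LE e) * gm (LG e)) - gm (LV v) \<in> leavitt_rels G"

inductive_set leavitt_ideal :: "('v, 'e) pre_digraph \<Rightarrow> ('r::ring_1, 'v, 'e) freealg set"
  for G where
  zero: "0 \<in> leavitt_ideal G"
| add: "x \<in> leavitt_rels G \<Longrightarrow> y \<in> leavitt_ideal G \<Longrightarrow> a * x * b + y \<in> leavitt_ideal G"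

text \<open>Path monomials: a path is an arc walk u p v of the digraph (length 0 walks
  are the vertices).  alpha and alpha^* as elements of the free algebra.\<close>
definition path_mon :: "'v \<Rightarrow> 'e list \<Rightarrow> ('r::ring_1, 'v, 'e) freealg" where
  "path_mon u p = (if p = [] then gm (LV u) else Poly_Mapping.single (Word (map LE p)) 1)"

definition path_star :: "'v \<Rightarrow> 'e list \<Rightarrow> ('r::ring_1, 'v, 'e) freealg" where
  "path_star u p = (if p = [] then gm (LV u) else Poly_Mapping.single (Word (rev (map LG p))) 1)"

text \<open>Representatives (in the free algebra) of elements of C_m = Span_R{alpha beta^*}.\<close>
inductive_set Cspan :: "('v, 'e) pre_digraph \<Rightarrow> nat \<Rightarrow> ('r::ring_1, 'v, 'e) freealg set"
  for G m where
  zero: "0 \<in> Cspan G m"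
| add: "pre_digraph.awalk G u1 a v1 \<Longrightarrow> pre_digraph.awalk G u2 b v2 \<Longrightarrow>
        length a = m \<Longrightarrow> length b = m \<Longrightarrow> y \<in> Cspan G m \<Longrightarrow>
        scal c * path_mon u1 a * path_star u2 b + y \<in> Cspan G m"

text \<open>The class of x in L_R(E) = free algebra / ideal lies in C_m.\<close>
definition inC :: "('v, 'e) pre_digraph \<Rightarrow> nat \<Rightarrow> ('r::ring_1, 'v, 'e) freealg \<Rightarrow> bool" where
  "inC G m x \<longleftrightarrow> (\<exists>y \<in> Cspan G m. x - y \<in> leavitt_ideal G)"

end

theory Submission
  imports Defs
begin


section \<open>The ideal\<close>

lemma li_rel: "x \<in> leavitt_rels G \<Longrightarrow> x \<in> leavitt_ideal G"
  using leavitt_ideal.add[OF _ leavitt_ideal.zero, of x G 1 1] by simp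

lemma li_add: "x \<in> leavitt_ideal G \<Longrightarrow> y \<in> leavitt_ideal G \<Longrightarrow> x + y \<in> leavitt_ideal G"
  by (induction x rule: leavitt_ideal.induct) (auto simp: add.assoc intro: leavitt_ideal.add)

lemma li_lmult: "x \<in> leavitt_ideal G \<Longrightarrow> c * x \<in> leavitt_ideal G"
proof (induction x rule: leavitt_ideal.induct)
  case zero then show ?case by (simp add: leavitt_ideal.zero)
next
  case (add x y a b)
  have "c * (a * x * b + y) = (c * a) * x * b + c * y" by (simp add: algebra_simps)
  then show ?case using add leavitt_ideal.add by metis
qed

lemma li_rmult: "x \<in> leavitt_ideal G \<Longrightarrow> x * c \<in> leavitt_ideal G"
proof (induction x rule: leavitt_ideal.induct)
  case zero then show ?case by (simp add: leavitt_ideal.zero)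
next
  case (add x y a b)
  have "(a * x * b + y) * c = a * x * (b * c) + y * c" by (simp add: algebra_simps)
  then show ?case using add leavitt_ideal.add by metis
qed

lemma li_neg: "x \<in> leavitt_ideal G \<Longrightarrow> - x \<in> leavitt_ideal G"
  using li_lmult[of x G "-1"] by simp

lemma li_diff: "x \<in> leavitt_ideal G \<Longrightarrow> y \<in> leavitt_ideal G \<Longrightarrow> x - y \<in> leavitt_ideal G"
  using li_add[OF _ li_neg] by (metis diff_conv_add_uminus)

definition cg :: "('v, 'e) pre_digraph \<Rightarrow> ('r::ring_1, 'v, 'e) freealg \<Rightarrow> ('r, 'v, 'e) freealg \<Rightarrow> bool" where
  "cg G x y \<longleftrightarrow> x - y \<in> leavitt_ideal G"

lemma cg_refl[simp]: "cg G x x" by (simp add: cg_def leavitt_ideal.zero)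

lemma cg_sym: "cg G x y \<Longrightarrow> cg G y x"
  unfolding cg_def using li_neg[of "x - y" G] by simp

lemma cg_trans[trans]: "cg G x y \<Longrightarrow> cg G y z \<Longrightarrow> cg G x z"
  unfolding cg_def using li_add[of "x - y" G "y - z"] by simp

lemma cg_eq_trans[trans]: "x = y \<Longrightarrow> cg G y z \<Longrightarrow> cg G x z" by simp
lemma cg_trans_eq[trans]: "cg G x y \<Longrightarrow> y = z \<Longrightarrow> cg G x z" by simp

lemma cg_add: "cg G x x' \<Longrightarrow> cg G y y' \<Longrightarrow> cg G (x + y) (x' + y')"
  unfolding cg_def using li_add[of "x - x'" G "y - y'"] by (simp add: algebra_simps)

lemma cg_mult: "cg G x x' \<Longrightarrow> cg G y y' \<Longrightarrow> cg G (x * y) (x' * y')"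
proof -
  assume a: "cg G x x'" "cg G y y'"
  have "x * y - x' * y' = (x - x') * y + x' * (y - y')" by (simp add: algebra_simps)
  moreover have "(x - x') * y \<in> leavitt_ideal G" using a(1) unfolding cg_def by (rule li_rmult)
  moreover have "x' * (y - y') \<in> leavitt_ideal G" using a(2) unfolding cg_def by (rule li_lmult)
  ultimately show ?thesis unfolding cg_def using li_add[of "(x - x') * y" G "x' * (y - y')"] by simp
qed

lemma cg_rel: "x - y \<in> leavitt_rels G \<Longrightarrow> cg G x y"
  unfolding cg_def by (rule li_rel)

lemma cg_sum: "(\<And>i. i \<in> A \<Longrightarrow> cg G (f i) (g i)) \<Longrightarrow> cg G (sum f A) (sum g A)"
  by (induction A rule: infinite_finite_induct) (auto intro: cg_add)

lemma cg_0: "cg G x 0 \<Longrightarrow> cg G (a * x * b) 0"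
  using cg_mult[OF cg_mult[OF cg_refl[of G a]] cg_refl[of G b], of x 0] by simp

section \<open>C levels\<close>

lemma Cspan_add: "x \<in> Cspan G m \<Longrightarrow> y \<in> Cspan G m \<Longrightarrow> x + y \<in> Cspan G m"
  by (induction x rule: Cspan.induct) (auto simp: add.assoc intro: Cspan.add)

lemma inC_0: "inC G m 0"
  unfolding inC_def by (intro bexI[of _ 0]) (auto intro: Cspan.zero leavitt_ideal.zero)

lemma inC_add: "inC G m x \<Longrightarrow> inC G m y \<Longrightarrow> inC G m (x + y)"
proof -
  assume "inC G m x" "inC G m y"
  then obtain x' y' where "x' \<in> Cspan G m" "y' \<in> Cspan G m" "cg G x x'" "cg G y y'"
    unfolding inC_def cg_def by blast
  then show ?thesis unfolding inC_def using Cspan_add cg_add[of G x x' y y'] unfolding cg_def by blast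
qed

lemma inC_cg: "inC G m x \<Longrightarrow> cg G x' x \<Longrightarrow> inC G m x'"
proof -
  assume "inC G m x" "cg G x' x"
  then obtain y where "y \<in> Cspan G m" "cg G x y"
    unfolding inC_def cg_def by blast
  then show ?thesis unfolding inC_def using cg_trans[of G x' x y] \<open>cg G x' x\<close> unfolding cg_def by blast
qed

lemma inC_sum: "(\<And>i. i \<in> A \<Longrightarrow> inC G m (f i)) \<Longrightarrow> inC G m (sum f A)"
  by (induction A rule: infinite_finite_induct) (auto intro: inC_add inC_0)

lemma inC_gen: "pre_digraph.awalk G u1 a v1 \<Longrightarrow> pre_digraph.awalk G u2 b v2 \<Longrightarrow>
        length a = m \<Longrightarrow> length b = m \<Longrightarrow> inC G m (scal c * path_mon u1 a * path_star u2 b)"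
  unfolding inC_def using Cspan.add[OF _ _ _ _ Cspan.zero, of G u1 a v1 u2 b v2 m c]
  by (intro bexI[where x="scal c * path_mon u1 a * path_star u2 b"]) (auto intro: leavitt_ideal.zero)

lemma scal_comm: "scal c * Poly_Mapping.single w 1 = Poly_Mapping.single w 1 * scal c"
  by (simp add: scal_def mult_single)

lemma gm_single: "gm g = Poly_Mapping.single (Word [g]) 1" by (simp add: gm_def)

lemma scal_comm_gm: "scal c * gm g = gm g * scal c"
  by (simp add: gm_def scal_comm)




lemma pm_single: "p \<noteq> [] \<Longrightarrow> path_mon u p = Poly_Mapping.single (Word (map LE p)) 1"
  by (simp add: path_mon_def)

lemma single_word_mult: "Poly_Mapping.single (Word xs) (1::'r::ring_1) * Poly_Mapping.single (Word ys) 1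
   = Poly_Mapping.single (Word (xs @ ys)) 1"
  by (simp add: mult_single)

context wf_digraph
begin

lemma r_se: "e \<in> arcs G \<Longrightarrow> cg G (gm (LV (tail G e)) * gm (LE e)) (gm (LE e))"
  by (rule cg_rel) (rule leavitt_rels.se)
lemma r_er: "e \<in> arcs G \<Longrightarrow> cg G (gm (LE e) * gm (LV (head G e))) (gm (LE e))"
  by (rule cg_rel) (rule leavitt_rels.er)
lemma r_rg: "e \<in> arcs G \<Longrightarrow> cg G (gm (LV (head G e)) * gm (LG e)) (gm (LG e))"
  by (rule cg_rel) (rule leavitt_rels.rg)
lemma r_gs: "e \<in> arcs G \<Longrightarrow> cg G (gm (LG e) * gm (LV (tail G e))) (gm (LG e))"
  by (rule cg_rel) (rule leavitt_rels.gs)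
lemma r_ck1: "e \<in> arcs G \<Longrightarrow> f \<in> arcs G \<Longrightarrow>
   cg G (gm (LG e) * gm (LE f)) (if e = f then gm (LV (head G e)) else 0)"
  by (rule cg_rel) (rule leavitt_rels.ck1)
lemma r_vv: "v \<in> verts G \<Longrightarrow> w \<in> verts G \<Longrightarrow>
   cg G (gm (LV v) * gm (LV w)) (if v = w then gm (LV v) else 0)"
  by (rule cg_rel) (rule leavitt_rels.vv)

lemma r_vv0: "v \<in> verts G \<Longrightarrow> w \<in> verts G \<Longrightarrow> v \<noteq> w \<Longrightarrow>
   cg G (gm (LV v) * gm (LV w)) 0"
  using r_vv[of v w] by simp

lemma r_vvv: "v \<in> verts G \<Longrightarrow> cg G (gm (LV v) * gm (LV v)) (gm (LV v))"
  using r_vv[of v v] by simp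

lemma vE0: "v \<in> verts G \<Longrightarrow> e \<in> arcs G \<Longrightarrow> v \<noteq> tail G e \<Longrightarrow> cg G (gm (LV v) * gm (LE e)) 0"
proof -
  assume a: "v \<in> verts G" "e \<in> arcs G" "v \<noteq> tail G e"
  have "cg G (gm (LV v) * gm (LE e)) (gm (LV v) * (gm (LV (tail G e)) * gm (LE e)))"
    by (rule cg_mult[OF cg_refl cg_sym[OF r_se]]) (use a in auto)
  also have "\<dots> = (gm (LV v) * gm (LV (tail G e))) * gm (LE e)" by (simp add: mult.assoc)
  also have "cg G \<dots> (0 * gm (LE e))" by (rule cg_mult[OF r_vv0 cg_refl]) (use a in auto)
  finally show ?thesis by simp
qed

lemma Ev0: "v \<in> verts G \<Longrightarrow> e \<in> arcs G \<Longrightarrow> v \<noteq> head G e \<Longrightarrow> cg G (gm (LE e) * gm (LV v)) 0"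
proof -
  assume a: "v \<in> verts G" "e \<in> arcs G" "v \<noteq> head G e"
  have "cg G (gm (LE e) * gm (LV v)) ((gm (LE e) * gm (LV (head G e))) * gm (LV v))"
    by (rule cg_mult[OF cg_sym[OF r_er] cg_refl]) (use a in auto)
  also have "\<dots> = gm (LE e) * (gm (LV (head G e)) * gm (LV v))" by (simp add: mult.assoc)
  also have "cg G \<dots> (gm (LE e) * 0)" by (rule cg_mult[OF cg_refl r_vv0]) (use a in auto)
  finally show ?thesis by simp
qed

lemma Gv0: "v \<in> verts G \<Longrightarrow> e \<in> arcs G \<Longrightarrow> v \<noteq> tail G e \<Longrightarrow> cg G (gm (LG e) * gm (LV v)) 0"
proof -
  assume a: "v \<in> verts G" "e \<in> arcs G" "v \<noteq> tail G e"
  have "cg G (gm (LG e) * gm (LV v)) ((gm (LG e) * gm (LV (tail G e))) * gm (LV v))"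
    by (rule cg_mult[OF cg_sym[OF r_gs] cg_refl]) (use a in auto)
  also have "\<dots> = gm (LG e) * (gm (LV (tail G e)) * gm (LV v))" by (simp add: mult.assoc)
  also have "cg G \<dots> (gm (LG e) * 0)" by (rule cg_mult[OF cg_refl r_vv0]) (use a in auto)
  finally show ?thesis by simp
qed

lemma vG0: "v \<in> verts G \<Longrightarrow> e \<in> arcs G \<Longrightarrow> v \<noteq> head G e \<Longrightarrow> cg G (gm (LV v) * gm (LG e)) 0"
proof -
  assume a: "v \<in> verts G" "e \<in> arcs G" "v \<noteq> head G e"
  have "cg G (gm (LV v) * gm (LG e)) (gm (LV v) * (gm (LV (head G e)) * gm (LG e)))"
    by (rule cg_mult[OF cg_refl cg_sym[OF r_rg]]) (use a in auto)
  also have "\<dots> = (gm (LV v) * gm (LV (head G e))) * gm (LG e)" by (simp add: mult.assoc)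
  also have "cg G \<dots> (0 * gm (LG e))" by (rule cg_mult[OF r_vv0 cg_refl]) (use a in auto)
  finally show ?thesis by simp
qed

lemma pm_cons: "awalk u (e # p) w \<Longrightarrow> cg G (path_mon u (e # p)) (gm (LE e) * path_mon (head G e) p)"
proof (cases p)
  case Nil
  assume a: "awalk u (e # p) w"
  then have "e \<in> arcs G" by (simp add: awalk_def)
  then show ?thesis using Nil cg_sym[OF r_er[of e]]
    by (simp add: path_mon_def gm_def)
next
  case (Cons a list)
  then show ?thesis
    by (simp add: path_mon_def gm_def single_word_mult)
qed

lemma ps_cons: "awalk u (e # p) w \<Longrightarrow> cg G (path_star u (e # p)) (path_star (head G e) p * gm (LG e))"
proof (cases p)
  case Nil
  assume a: "awalk u (e # p) w"
  then have "e \<in> arcs G" by (simp add: awalk_def)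
  then show ?thesis using Nil cg_sym[OF r_rg[of e]]
    by (simp add: path_star_def gm_def)
next
  case (Cons a list)
  then show ?thesis
    by (simp add: path_star_def gm_def single_word_mult)
qed

lemma awalk_ConsD: "awalk u (e # p) w \<Longrightarrow> e \<in> arcs G \<and> u = tail G e \<and> awalk (head G e) p w"
  by (simp add: awalk_def)

lemma awalk_Cons_intro: "e \<in> arcs G \<Longrightarrow> awalk (head G e) p w \<Longrightarrow> awalk (tail G e) (e # p) w"
  by (simp add: awalk_def)

lemma Vabs_l: "awalk u p w \<Longrightarrow> cg G (gm (LV u) * path_mon u p) (path_mon u p)"
proof (cases p)
  case Nil
  assume "awalk u p w"
  then have "u \<in> verts G" by (simp add: awalk_def)
  then show ?thesis using Nil r_vvv[of u] by (simp add: path_mon_def)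
next
  case (Cons e q)
  assume a: "awalk u p w"
  then have e: "e \<in> arcs G" "u = tail G e" using Cons awalk_ConsD by auto
  have "cg G (gm (LV u) * path_mon u p) (gm (LV u) * (gm (LE e) * path_mon (head G e) q))"
    using cg_mult[OF cg_refl pm_cons[of u e q w]] a Cons by simp
  also have "\<dots> = (gm (LV (tail G e)) * gm (LE e)) * path_mon (head G e) q" using e by (simp add: mult.assoc)
  also have "cg G \<dots> (gm (LE e) * path_mon (head G e) q)" by (rule cg_mult[OF r_se[OF e(1)] cg_refl])
  also have "cg G \<dots> (path_mon u p)" using cg_sym[OF pm_cons[of u e q w]] a Cons by simp
  finally show ?thesis .
qed

lemma Vabs_r: "awalk u p w \<Longrightarrow> cg G (path_star u p * gm (LV u)) (path_star u p)"
proof (cases p)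
  case Nil
  assume "awalk u p w"
  then have "u \<in> verts G" by (simp add: awalk_def)
  then show ?thesis using Nil r_vvv[of u] by (simp add: path_star_def)
next
  case (Cons e q)
  assume a: "awalk u p w"
  then have e: "e \<in> arcs G" "u = tail G e" using Cons awalk_ConsD by auto
  have "cg G (path_star u p * gm (LV u)) ((path_star (head G e) q * gm (LG e)) * gm (LV u))"
    using cg_mult[OF ps_cons[of u e q w] cg_refl] a Cons by simp
  also have "\<dots> = path_star (head G e) q * (gm (LG e) * gm (LV (tail G e)))" using e by (simp add: mult.assoc)
  also have "cg G \<dots> (path_star (head G e) q * gm (LG e))" by (rule cg_mult[OF cg_refl r_gs[OF e(1)]])
  also have "cg G \<dots> (path_star u p)" using cg_sym[OF ps_cons[of u e q w]] a Cons by simp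
  finally show ?thesis .
qed

end



lemma gm_scal_left: "gm g * (scal c * Z) = scal c * (gm g * Z)"
  by (simp add: mult.assoc[symmetric] scal_comm_gm)

lemma scal_gm_right: "(Z * scal c) * gm g = (Z * gm g) * scal c"
  by (simp add: mult.assoc scal_comm_gm)

context wf_digraph
begin

lemma peel_l: "awalk u (a # p) w \<Longrightarrow> e \<in> arcs G \<Longrightarrow>
   cg G (gm (LG e) * path_mon u (a # p)) (if e = a then path_mon (head G a) p else 0)"
proof -
  assume aw: "awalk u (a # p) w" and e: "e \<in> arcs G"
  then have a: "a \<in> arcs G" "awalk (head G a) p w" using awalk_ConsD by auto
  have "cg G (gm (LG e) * path_mon u (a # p)) (gm (LG e) * (gm (LE a) * path_mon (head G a) p))"
    by (rule cg_mult[OF cg_refl pm_cons[OF aw]])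
  also have "\<dots> = (gm (LG e) * gm (LE a)) * path_mon (head G a) p" by (simp add: mult.assoc)
  also have "cg G \<dots> ((if e = a then gm (LV (head G e)) else 0) * path_mon (head G a) p)"
    by (rule cg_mult[OF r_ck1[OF e a(1)] cg_refl])
  also have "cg G \<dots> (if e = a then path_mon (head G a) p else 0)"
    using Vabs_l[OF a(2)] by auto
  finally show ?thesis .
qed

lemma peel_r: "awalk u (b # q) w \<Longrightarrow> f \<in> arcs G \<Longrightarrow>
   cg G (path_star u (b # q) * gm (LE f)) (if f = b then path_star (head G b) q else 0)"
proof -
  assume aw: "awalk u (b # q) w" and f: "f \<in> arcs G"
  then have b: "b \<in> arcs G" "awalk (head G b) q w" using awalk_ConsD by auto
  have "cg G (path_star u (b # q) * gm (LE f)) ((path_star (head G b) q * gm (LG b)) * gm (LE f))"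
    by (rule cg_mult[OF ps_cons[OF aw] cg_refl])
  also have "\<dots> = path_star (head G b) q * (gm (LG b) * gm (LE f))" by (simp add: mult.assoc)
  also have "cg G \<dots> (path_star (head G b) q * (if b = f then gm (LV (head G b)) else 0))"
    by (rule cg_mult[OF cg_refl r_ck1[OF b(1) f]])
  also have "cg G \<dots> (if f = b then path_star (head G b) q else 0)"
    using Vabs_r[OF b(2)] by auto
  finally show ?thesis .
qed

lemma wrap_l: "awalk u p w \<Longrightarrow> e \<in> arcs G \<Longrightarrow>
   cg G (gm (LE e) * path_mon u p) (if head G e = u then path_mon (tail G e) (e # p) else 0)"
proof -
  assume aw: "awalk u p w" and e: "e \<in> arcs G"
  have u: "u \<in> verts G" using aw by (simp add: awalk_def)
  show ?thesis
  proof (cases "head G e = u")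
    case True
    then have "awalk (tail G e) (e # p) w" using aw e awalk_Cons_intro by auto
    then show ?thesis using cg_sym[OF pm_cons] True by auto
  next
    case False
    have "cg G (gm (LE e) * path_mon u p) (gm (LE e) * (gm (LV u) * path_mon u p))"
      by (rule cg_mult[OF cg_refl cg_sym[OF Vabs_l[OF aw]]])
    also have "\<dots> = (gm (LE e) * gm (LV u)) * path_mon u p" by (simp add: mult.assoc)
    also have "cg G \<dots> (0 * path_mon u p)" by (rule cg_mult[OF Ev0 cg_refl]) (use u e False in auto)
    finally show ?thesis using False by simp
  qed
qed

lemma wrap_r: "awalk u p w \<Longrightarrow> f \<in> arcs G \<Longrightarrow>
   cg G (path_star u p * gm (LG f)) (if head G f = u then path_star (tail G f) (f # p) else 0)"
proof -
  assume aw: "awalk u p w" and f: "f \<in> arcs G"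
  have u: "u \<in> verts G" using aw by (simp add: awalk_def)
  show ?thesis
  proof (cases "head G f = u")
    case True
    then have "awalk (tail G f) (f # p) w" using aw f awalk_Cons_intro by auto
    then show ?thesis using cg_sym[OF ps_cons] True by auto
  next
    case False
    have "cg G (path_star u p * gm (LG f)) ((path_star u p * gm (LV u)) * gm (LG f))"
      by (rule cg_mult[OF cg_sym[OF Vabs_r[OF aw]] cg_refl])
    also have "\<dots> = path_star u p * (gm (LV u) * gm (LG f))" by (simp add: mult.assoc)
    also have "cg G \<dots> (path_star u p * 0)" by (rule cg_mult[OF cg_refl vG0]) (use u f False in auto)
    finally show ?thesis using False by simp
  qed
qed

lemma peel0_l: "u \<in> verts G \<Longrightarrow> e \<in> arcs G \<Longrightarrow>
   cg G (gm (LG e) * gm (LV u)) (if u = tail G e then gm (LG e) else 0)"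
  using r_gs[of e] Gv0[of u e] by auto

lemma peel0_r: "u \<in> verts G \<Longrightarrow> f \<in> arcs G \<Longrightarrow>
   cg G (gm (LV u) * gm (LE f)) (if u = tail G f then gm (LE f) else 0)"
  using r_se[of f] vE0[of u f] by auto

lemma inC_scal_if: "(P \<Longrightarrow> Q \<Longrightarrow> inC G m (scal c * A * B)) \<Longrightarrow>
   inC G m (scal c * ((if P then A else 0) * (if Q then B else 0)))"
  by (cases P; cases Q) (auto simp: inC_0 mult.assoc)

lemma mono_peel:
  assumes aw1: "awalk u1 a v1" and aw2: "awalk u2 b v2" and la: "length a = k" and lb: "length b = k"
    and e: "e \<in> arcs G" and f: "f \<in> arcs G"
  shows "inC G (k - 1) (gm (LG e) * (scal c * path_mon u1 a * path_star u2 b) * gm (LE f))"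
proof -
  have eq: "gm (LG e) * (scal c * path_mon u1 a * path_star u2 b) * gm (LE f)
    = scal c * ((gm (LG e) * path_mon u1 a) * (path_star u2 b * gm (LE f)))"
    by (simp add: gm_scal_left mult.assoc)
  show ?thesis
  proof (cases k)
    case 0
    then have ab: "a = []" "b = []" using la lb by auto
    then have u: "u1 \<in> verts G" "u2 \<in> verts G" using aw1 aw2 by (auto simp: awalk_def)
    have "cg G (scal c * ((gm (LG e) * path_mon u1 a) * (path_star u2 b * gm (LE f))))
       (scal c * ((if u1 = tail G e then gm (LG e) else 0) * (if u2 = tail G f then gm (LE f) else 0)))"
    proof -
      have "cg G (gm (LG e) * path_mon u1 a) (if u1 = tail G e then gm (LG e) else 0)"
        using ab peel0_l[OF u(1) e] by (simp add: path_mon_def)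
      moreover have "cg G (path_star u2 b * gm (LE f)) (if u2 = tail G f then gm (LE f) else 0)"
        using ab peel0_r[OF u(2) f] by (simp add: path_star_def)
      ultimately show ?thesis by (intro cg_mult cg_refl)
    qed
    moreover have "inC G 0 (scal c * ((if u1 = tail G e then gm (LG e) else 0) * (if u2 = tail G f then gm (LE f) else 0)))"
    proof (rule inC_scal_if)
      have h: "head G e \<in> verts G" using e by simp
      have aw: "awalk (head G e) [] (head G e)" using h by (simp add: awalk_def)
      have "inC G 0 (scal c * (if e = f then gm (LV (head G e)) else 0))"
      proof (cases "e = f")
        case True
        have "inC G 0 (scal c * path_mon (head G e) [] * path_star (head G e) [])"
          by (rule inC_gen[OF aw aw]) auto
        moreover have "cg G (scal c * gm (LV (head G e))) (scal c * path_mon (head G e) [] * path_star (head G e) [])"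
          using cg_mult[OF cg_refl cg_sym[OF r_vvv[OF h]], of "scal c"]
          by (simp add: path_mon_def path_star_def mult.assoc)
        ultimately show ?thesis using True inC_cg by auto
      qed (simp add: inC_0)
      moreover have "cg G (scal c * gm (LG e) * gm (LE f)) (scal c * (if e = f then gm (LV (head G e)) else 0))"
        using cg_mult[OF cg_refl r_ck1[OF e f], of "scal c"] by (simp add: mult.assoc)
      ultimately show "inC G 0 (scal c * gm (LG e) * gm (LE f))" using inC_cg by blast
    qed
    ultimately show ?thesis using eq 0 inC_cg by auto
  next
    case (Suc k')
    then obtain a1 a' b1 b' where ab: "a = a1 # a'" "b = b1 # b'" using la lb
      by (cases a; cases b) auto
    have aw1': "awalk (head G a1) a' v1" and aw2': "awalk (head G b1) b' v2"
      using aw1 aw2 ab awalk_ConsD by auto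
    have "cg G (scal c * ((gm (LG e) * path_mon u1 a) * (path_star u2 b * gm (LE f))))
       (scal c * ((if e = a1 then path_mon (head G a1) a' else 0) * (if f = b1 then path_star (head G b1) b' else 0)))"
    proof -
      have x1: "awalk u1 (a1 # a') v1" "awalk u2 (b1 # b') v2" using aw1 aw2 ab by auto
      show ?thesis using ab cg_mult[OF cg_refl cg_mult[OF peel_l[OF x1(1) e] peel_r[OF x1(2) f]]] by auto
    qed
    moreover have "inC G k' (scal c * ((if e = a1 then path_mon (head G a1) a' else 0) * (if f = b1 then path_star (head G b1) b' else 0)))"
      by (rule inC_scal_if, rule inC_gen[OF aw1' aw2']) (use la lb ab Suc in auto)
    ultimately show ?thesis using eq Suc inC_cg by auto
  qed
qed

lemma mono_wrap:
  assumes aw1: "awalk u1 a v1" and aw2: "awalk u2 b v2" and la: "length a = k" and lb: "length b = k"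
    and e: "e \<in> arcs G" and f: "f \<in> arcs G"
  shows "inC G (Suc k) (gm (LE e) * (scal c * path_mon u1 a * path_star u2 b) * gm (LG f))"
proof -
  have eq: "gm (LE e) * (scal c * path_mon u1 a * path_star u2 b) * gm (LG f)
    = scal c * ((gm (LE e) * path_mon u1 a) * (path_star u2 b * gm (LG f)))"
    by (simp add: gm_scal_left mult.assoc)
  have "cg G (scal c * ((gm (LE e) * path_mon u1 a) * (path_star u2 b * gm (LG f))))
     (scal c * ((if head G e = u1 then path_mon (tail G e) (e # a) else 0) *
                (if head G f = u2 then path_star (tail G f) (f # b) else 0)))"
    by (rule cg_mult[OF cg_refl cg_mult[OF wrap_l[OF aw1 e] wrap_r[OF aw2 f]]])
  moreover have "inC G (Suc k) (scal c * ((if head G e = u1 then path_mon (tail G e) (e # a) else 0) *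
                (if head G f = u2 then path_star (tail G f) (f # b) else 0)))"
  proof (rule inC_scal_if)
    assume "head G e = u1" "head G f = u2"
    then have "awalk (tail G e) (e # a) v1" "awalk (tail G f) (f # b) v2"
      using aw1 aw2 e f awalk_Cons_intro by auto
    then show "inC G (Suc k) (scal c * path_mon (tail G e) (e # a) * path_star (tail G f) (f # b))"
      by (rule inC_gen) (use la lb in auto)
  qed
  ultimately show ?thesis using eq inC_cg by auto
qed

end



definition PF :: "'e set \<Rightarrow> ('r::ring_1, 'v, 'e) freealg" where
  "PF F = (\<Sum>e\<in>F. gm (LE e) * gm (LG e))"

lemma scal_PF: "scal c * (PF F :: ('r::ring_1, 'v, 'e) freealg) = PF F * scal c"
proof -
  have "scal c * ((gm (LE e) :: ('r, 'v, 'e) freealg) * gm (LG e)) = (gm (LE e) * gm (LG e)) * scal c" for e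
  proof -
    have "scal c * (gm (LE e) * gm (LG e)) = (scal c * gm (LE e)) * gm (LG e)" by (rule mult.assoc[symmetric])
    also have "\<dots> = gm (LE e) * (scal c * gm (LG e))" by (simp only: scal_comm_gm mult.assoc)
    also have "\<dots> = (gm (LE e) * gm (LG e)) * scal c" by (simp only: scal_comm_gm mult.assoc)
    finally show ?thesis .
  qed
  then show ?thesis unfolding PF_def sum_distrib_left sum_distrib_right by (intro sum.cong) auto
qed

lemma PF_expand: "PF F * x * PF F = (\<Sum>e\<in>F. \<Sum>f\<in>F. gm (LE e) * (gm (LG e) * x * gm (LE f)) * gm (LG f))"
  unfolding PF_def
  apply (subst sum_distrib_right)
  apply (subst sum_distrib_right)
  apply (rule sum.cong, rule refl)
  apply (subst sum_distrib_left)
  apply (rule sum.cong, rule refl)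
  apply (simp add: mult.assoc)
  done

context wf_digraph
begin

lemma peel_inC: "inC G k x \<Longrightarrow> e \<in> arcs G \<Longrightarrow> f \<in> arcs G \<Longrightarrow> inC G (k - 1) (gm (LG e) * x * gm (LE f))"
proof -
  assume x: "inC G k x" and e: "e \<in> arcs G" and f: "f \<in> arcs G"
  obtain y where y: "y \<in> Cspan G k" "cg G x y" using x unfolding inC_def cg_def by blast
  have "inC G (k - 1) (gm (LG e) * y * gm (LE f))" using y(1)
  proof (induction rule: Cspan.induct)
    case zero then show ?case by (simp add: inC_0)
  next
    case (add u1 a v1 u2 b v2 y c)
    have "inC G (k - 1) (gm (LG e) * (scal c * path_mon u1 a * path_star u2 b) * gm (LE f))"
      by (rule mono_peel) (use add e f in auto)
    then show ?case using add.IH by (simp add: algebra_simps inC_add)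
  qed
  then show ?thesis using cg_mult[OF cg_mult[OF cg_refl y(2)] cg_refl] inC_cg by blast
qed

lemma wrap_inC: "inC G k x \<Longrightarrow> e \<in> arcs G \<Longrightarrow> f \<in> arcs G \<Longrightarrow> inC G (Suc k) (gm (LE e) * x * gm (LG f))"
proof -
  assume x: "inC G k x" and e: "e \<in> arcs G" and f: "f \<in> arcs G"
  obtain y where y: "y \<in> Cspan G k" "cg G x y" using x unfolding inC_def cg_def by blast
  have "inC G (Suc k) (gm (LE e) * y * gm (LG f))" using y(1)
  proof (induction rule: Cspan.induct)
    case zero then show ?case by (simp add: inC_0)
  next
    case (add u1 a v1 u2 b v2 y c)
    have "inC G (Suc k) (gm (LE e) * (scal c * path_mon u1 a * path_star u2 b) * gm (LG f))"
      by (rule mono_wrap) (use add e f in auto)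
    then show ?case using add.IH by (simp add: algebra_simps inC_add)
  qed
  then show ?thesis using cg_mult[OF cg_mult[OF cg_refl y(2)] cg_refl] inC_cg by blast
qed

lemma pf_l: "finite F \<Longrightarrow> F \<subseteq> arcs G \<Longrightarrow> a \<in> F \<Longrightarrow> awalk u (a # p) w \<Longrightarrow>
  cg G (PF F * path_mon u (a # p)) (path_mon u (a # p))"
proof -
  assume F: "finite F" "F \<subseteq> arcs G" "a \<in> F" and aw: "awalk u (a # p) w"
  have "PF F * path_mon u (a # p) = (\<Sum>e\<in>F. gm (LE e) * (gm (LG e) * path_mon u (a # p)))"
    by (simp add: PF_def sum_distrib_right mult.assoc)
  also have "cg G \<dots> (\<Sum>e\<in>F. gm (LE e) * (if e = a then path_mon (head G a) p else 0))"
    by (rule cg_sum, rule cg_mult[OF cg_refl peel_l[OF aw]]) (use F in auto)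
  also have "\<dots> = (\<Sum>e\<in>F. if e = a then gm (LE e) * path_mon (head G a) p else 0)"
    by (rule sum.cong) auto
  also have "\<dots> = gm (LE a) * path_mon (head G a) p" using F by simp
  also have "cg G \<dots> (path_mon u (a # p))" by (rule cg_sym[OF pm_cons[OF aw]])
  finally show ?thesis .
qed

lemma pf_r: "finite F \<Longrightarrow> F \<subseteq> arcs G \<Longrightarrow> b \<in> F \<Longrightarrow> awalk u (b # q) w \<Longrightarrow>
  cg G (path_star u (b # q) * PF F) (path_star u (b # q))"
proof -
  assume F: "finite F" "F \<subseteq> arcs G" "b \<in> F" and aw: "awalk u (b # q) w"
  have "path_star u (b # q) * PF F = (\<Sum>e\<in>F. (path_star u (b # q) * gm (LE e)) * gm (LG e))"
    by (simp add: PF_def sum_distrib_left mult.assoc)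
  also have "cg G \<dots> (\<Sum>e\<in>F. (if e = b then path_star (head G b) q else 0) * gm (LG e))"
    by (rule cg_sum, rule cg_mult[OF peel_r[OF aw] cg_refl]) (use F in auto)
  also have "\<dots> = (\<Sum>e\<in>F. if e = b then path_star (head G b) q * gm (LG e) else 0)"
    by (rule sum.cong) auto
  also have "\<dots> = path_star (head G b) q * gm (LG b)" using F by simp
  also have "cg G \<dots> (path_star u (b # q))" by (rule cg_sym[OF ps_cons[OF aw]])
  finally show ?thesis .
qed

lemma decomp_span: "y \<in> Cspan G (Suc k) \<Longrightarrow> \<exists>F. finite F \<and> F \<subseteq> arcs G \<and>
   (\<forall>F'. finite F' \<longrightarrow> F \<subseteq> F' \<longrightarrow> F' \<subseteq> arcs G \<longrightarrow> cg G (PF F' * y * PF F') y)"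
proof (induction rule: Cspan.induct)
  case zero
  show ?case by (intro exI[of _ "{}"]) simp
next
  case (add u1 a v1 u2 b v2 y c)
  obtain F where F: "finite F" "F \<subseteq> arcs G"
    "\<forall>F'. finite F' \<longrightarrow> F \<subseteq> F' \<longrightarrow> F' \<subseteq> arcs G \<longrightarrow> cg G (PF F' * y * PF F') y"
    using add.IH by blast
  obtain a1 a' b1 b' where ab: "a = a1 # a'" "b = b1 # b'" using add.hyps(3,4)
    by (cases a; cases b) auto
  have arcs: "a1 \<in> arcs G" "b1 \<in> arcs G" using add.hyps(1,2) ab awalk_ConsD by auto
  show ?case
  proof (intro exI[of _ "F \<union> {a1, b1}"] conjI allI impI)
    show "finite (F \<union> {a1, b1})" using F by simp
    show "F \<union> {a1, b1} \<subseteq> arcs G" using F arcs by simp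
    fix F' assume F': "finite F'" "F \<union> {a1, b1} \<subseteq> F'" "F' \<subseteq> arcs G"
    have "PF F' * (scal c * path_mon u1 a * path_star u2 b) * PF F'
       = scal c * (PF F' * path_mon u1 a) * (path_star u2 b * PF F')"
      by (simp add: mult.assoc[symmetric] scal_PF)
    also have "cg G \<dots> (scal c * path_mon u1 a * path_star u2 b)"
    proof -
      have aw: "awalk u1 (a1 # a') v1" "awalk u2 (b1 # b') v2" using add.hyps(1,2) ab by auto
      have i: "a1 \<in> F'" "b1 \<in> F'" using F' by auto
      show ?thesis using ab cg_mult[OF cg_mult[OF cg_refl pf_l[OF F'(1) F'(3) i(1) aw(1)]] pf_r[OF F'(1) F'(3) i(2) aw(2)], of "scal c"]
        by simp
    qed
    finally have M: "cg G (PF F' * (scal c * path_mon u1 a * path_star u2 b) * PF F') (scal c * path_mon u1 a * path_star u2 b)" .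
    have Y: "cg G (PF F' * y * PF F') y" using F(3) F' by auto
    show "cg G (PF F' * (scal c * path_mon u1 a * path_star u2 b + y) * PF F')
        (scal c * path_mon u1 a * path_star u2 b + y)"
    proof -
      have "PF F' * (scal c * path_mon u1 a * path_star u2 b + y) * PF F'
         = PF F' * (scal c * path_mon u1 a * path_star u2 b) * PF F' + PF F' * y * PF F'"
        by (simp add: distrib_left distrib_right)
      then show ?thesis using cg_add[OF M Y] by simp
    qed
  qed
qed

lemma decomp: "inC G (Suc k) x \<Longrightarrow> \<exists>F. finite F \<and> F \<subseteq> arcs G \<and>
   cg G x (\<Sum>e\<in>F. \<Sum>f\<in>F. gm (LE e) * (gm (LG e) * x * gm (LE f)) * gm (LG f))"
proof -
  assume "inC G (Suc k) x"
  then obtain y where y: "y \<in> Cspan G (Suc k)" "cg G x y" unfolding inC_def cg_def by blast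
  obtain F where F: "finite F" "F \<subseteq> arcs G" "cg G (PF F * y * PF F) y"
    using decomp_span[OF y(1)] by blast
  have "cg G (PF F * x * PF F) (PF F * y * PF F)" by (intro cg_mult cg_refl y(2))
  then have "cg G (PF F * x * PF F) x" using F(3) cg_trans cg_sym[OF y(2)] by blast
  then show ?thesis using F by (intro exI[of _ F]) (auto simp: PF_expand intro: cg_sym)
qed

lemma inC_dsum: "(\<And>e f. e \<in> F \<Longrightarrow> f \<in> F \<Longrightarrow> inC G j (T e f)) \<Longrightarrow> inC G j (\<Sum>e\<in>F. \<Sum>f\<in>F. T e f)"
  by (intro inC_sum) auto

lemma interp: "inC G m y \<Longrightarrow> inC G n y \<Longrightarrow> m \<le> j \<Longrightarrow> j \<le> n \<Longrightarrow> inC G j y"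
proof (induction n arbitrary: y m j)
  case 0
  then have "j = m" by simp
  then show ?case using 0(1) by simp
next
  case (Suc n)
  show ?case
  proof (cases "j = m")
    case True then show ?thesis using Suc.prems(1) by simp
  next
    case False
    then obtain j' where j: "j = Suc j'" using Suc.prems by (cases j) auto
    obtain F where F: "finite F" "F \<subseteq> arcs G"
      "cg G y (\<Sum>e\<in>F. \<Sum>f\<in>F. gm (LE e) * (gm (LG e) * y * gm (LE f)) * gm (LG f))"
      using decomp[OF Suc.prems(2)] by blast
    have "inC G j (\<Sum>e\<in>F. \<Sum>f\<in>F. gm (LE e) * (gm (LG e) * y * gm (LE f)) * gm (LG f))"
    proof (rule inC_dsum)
      fix e f assume ef: "e \<in> F" "f \<in> F"
      then have ef': "e \<in> arcs G" "f \<in> arcs G" using F by auto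
      have z1: "inC G n (gm (LG e) * y * gm (LE f))" using peel_inC[OF Suc.prems(2) ef'] by simp
      have z2: "inC G (m - 1) (gm (LG e) * y * gm (LE f))" using peel_inC[OF Suc.prems(1) ef'] .
      have "inC G j' (gm (LG e) * y * gm (LE f))"
        by (rule Suc.IH[OF z2 z1]) (use Suc.prems j in auto)
      then show "inC G j (gm (LE e) * (gm (LG e) * y * gm (LE f)) * gm (LG f))"
        using wrap_inC[OF _ ef'] j by simp
    qed
    then show ?thesis using F(3) inC_cg by blast
  qed
qed

lemma stepC: "(\<And>x::('r::ring_1, 'a, 'b) freealg. inC G (Suc k) x \<Longrightarrow> inC G k x) \<Longrightarrow> inC G (Suc (Suc k)) (x::('r, 'a, 'b) freealg) \<Longrightarrow> inC G (Suc k) x"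
proof -
  assume H: "\<And>x::('r::ring_1, 'a, 'b) freealg. inC G (Suc k) x \<Longrightarrow> inC G k x" and x: "inC G (Suc (Suc k)) x"
  obtain F where F: "finite F" "F \<subseteq> arcs G"
    "cg G x (\<Sum>e\<in>F. \<Sum>f\<in>F. gm (LE e) * (gm (LG e) * x * gm (LE f)) * gm (LG f))"
    using decomp[OF x] by blast
  have "inC G (Suc k) (\<Sum>e\<in>F. \<Sum>f\<in>F. gm (LE e) * (gm (LG e) * x * gm (LE f)) * gm (LG f))"
  proof (rule inC_dsum)
    fix e f assume ef: "e \<in> F" "f \<in> F"
    then have ef': "e \<in> arcs G" "f \<in> arcs G" using F by auto
    have z: "inC G (Suc k) (gm (LG e) * x * gm (LE f))" using peel_inC[OF x ef'] by simp
    show "inC G (Suc k) (gm (LE e) * (gm (LG e) * x * gm (LE f)) * gm (LG f))"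
      using wrap_inC[OF H[OF z] ef'] by simp
  qed
  then show ?thesis using F(3) inC_cg by blast
qed

lemma chain: "(\<And>x::('r::ring_1, 'a, 'b) freealg. inC G (Suc t) x \<Longrightarrow> inC G t x) \<Longrightarrow> t \<le> n \<Longrightarrow> inC G (Suc n) (x::('r, 'a, 'b) freealg) \<Longrightarrow> inC G n x"
proof (induction n arbitrary: x)
  case 0
  then have "t = 0" by simp
  then show ?case using 0(1)[of x] 0(3) by simp
next
  case (Suc n)
  show ?case
  proof (cases "t = Suc n")
    case True then show ?thesis using Suc by blast
  next
    case False
    then have "t \<le> n" using Suc.prems by simp
    have H: "\<And>x::('r, 'a, 'b) freealg. inC G (Suc n) x \<Longrightarrow> inC G n x"
      using Suc.IH[OF Suc.prems(1) \<open>t \<le> n\<close>] .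
    show ?thesis by (rule stepC[OF H Suc.prems(3)])
  qed
qed

lemma down: "(\<And>x::('r::ring_1, 'a, 'b) freealg. inC G (Suc t) x \<Longrightarrow> inC G t x) \<Longrightarrow> t \<le> n \<Longrightarrow> inC G n (x::('r, 'a, 'b) freealg) \<Longrightarrow> inC G t x"
proof (induction n arbitrary: x)
  case 0 then show ?case by simp
next
  case (Suc n)
  show ?case
  proof (cases "t = Suc n")
    case True then show ?thesis using Suc.prems(1)[of x] Suc.prems(3) by simp
  next
    case False
    then have "t \<le> n" using Suc.prems by simp
    have "inC G n x" by (rule chain[OF Suc.prems(1) \<open>t \<le> n\<close> Suc.prems(3)])
    then show ?thesis using Suc.IH[OF Suc.prems(1) \<open>t \<le> n\<close>] by simp
  qed
qed

end

theorem lemma4p4: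
  fixes G :: "('v, 'e) pre_digraph" and t :: nat
  assumes "wf_digraph G"
    and "\<forall>x :: ('r::ring_1, 'v, 'e) freealg. inC G (t + 1) x \<longrightarrow> (\<exists>m \<le> t. inC G m x)"
  shows "\<forall>x :: ('r, 'v, 'e) freealg. (\<exists>m. inC G m x) \<longleftrightarrow> (\<exists>m \<le> t. inC G m x)"
proof -
  interpret wf_digraph G by (rule assms(1))
  have H: "inC G t x" if "inC G (Suc t) x" for x :: "('r, 'v, 'e) freealg"
  proof -
    have "inC G (t + 1) x" using that by simp
    then obtain m where "m \<le> t" "inC G m x" using assms(2) by blast
    then show ?thesis using interp[of m x "Suc t" t] that by simp
  qed
  show ?thesis
  proof (intro allI iffI)
    fix x :: "('r, 'v, 'e) freealg"
    assume "\<exists>m. inC G m x"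
    then obtain m where m: "inC G m x" by blast
    show "\<exists>m \<le> t. inC G m x"
    proof (cases "m \<le> t")
      case True then show ?thesis using m by blast
    next
      case False then show ?thesis using down[OF H, of m x] m by auto
    qed
  next
    fix x :: "('r, 'v, 'e) freealg"
    assume "\<exists>m \<le> t. inC G m x"
    then show "\<exists>m. inC G m x" by auto
  qed
qed


end
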